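(* Let $\mathbf A$ be an additive category, ${\tt G}$ a digraph, $P\subseteq SG({\tt G})$ a squared and faithful sub-poset, and $\epsilon$ a sign assignment on $P$. For any covariant functor $\mathcal F\colon\mathbf P\to\mathbf A$ define \[C^n_{\mathcal F}(P)=\bigoplus_{{\tt H}\in P,\ \ell({\tt H})=n}\mathcal F({\tt H}),\qquad d^n=\sum_{{\tt H}\in P,\ \ell({\tt H})=n}\ \sum_{{\tt H}'\in P,\ {\tt H}\prec{\tt H}'}(-1)^{\epsilon({\tt H},{\tt H}')}\mathcal F({\tt H}\prec{\tt H}').\] Then $d^n\circ d^{n-1}=0$ for every $n\in\mathbb N$; in particular $(C^*_{\mathcal F}(P),d^* )$ is a cochain complex.
   Context: A digraph ${\tt G}=(V,E)$ has finite $V$ and $E\subseteq(V\times V)\setminus\{(v,v)\}$. $SG({\tt G})$ is the poset of all subgraphs ${\tt H}$ of ${\tt G}$ ($V({\tt H})\subseteq V({\tt G})$, $E({\tt H})\subseteq E({\tt G})$, ${\tt H}$ a digraph) ordered by being a proper subgraph. For a poset, $x\,\tilde\triangleleft\,y$ ($y$ covers $x$) means $x\triangleleft y$ with no $z$ strictly between. A sub-poset $S'$ of $S$ (with induced order) is faithful if its covering relation equals the restriction to $S'$ of the covering relation of $S$; it is squared if for any $x,y,z\in S'$ with $x\,\tilde\triangleleft\,y\,\tilde\triangleleft\,z$ there is a unique $y'\neq y$ with $x\,\tilde\triangleleft\,y'\,\tilde\triangleleft\,z$ (such $x,y,y',z$ form a square). A sign assignment on a poset is a choice of $\epsilon_{x,y}\in\mathbb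 Z_2$ for each covering pair $x\,\tilde\triangleleft\,y$ such that $\epsilon_{x,y}+\epsilon_{y,z}\equiv\epsilon_{x,y'}+\epsilon_{y',z}+1\pmod 2$ for every square. In the formulas, ${\tt H}\prec{\tt H}'$ denotes the covering relation in $P$. The level of ${\tt H}\in P$ is $\ell({\tt H})=\#E({\tt H})+\#V({\tt H})-\min\{\#E({\tt H}')+\#V({\tt H}')\mid{\tt H}'\in P\}$. $\mathbf P$ is the category with objects the elements of $P$ and a unique morphism $x\to y$ iff $x\le y$. *)

theory Defs
  imports "HOL-Algebra.FiniteProduct" "HOL-Library.Z2"
begin

type_synonym 'v digraph = "'v set \<times> ('v \<times> 'v) set"

definition is_digraph :: "'v digraph \<Rightarrow> bool" where
  "is_digraph H \<longleftrightarrow> finite (fst H) \<and> snd H \<subseteq> fst H \<times> fst H \<and> (\<forall>v. (v, v) \<notin> snd H)"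

definition SG :: "'v digraph \<Rightarrow> 'v digraph set" where
  "SG G = {H. is_digraph H \<and> fst H \<subseteq> fst G \<and> snd H \<subseteq> snd G}"

definition subgraph_le :: "'v digraph \<Rightarrow> 'v digraph \<Rightarrow> bool" where
  "subgraph_le H H' \<longleftrightarrow> fst H \<subseteq> fst H' \<and> snd H \<subseteq> snd H'"

definition subgraph_lt :: "'v digraph \<Rightarrow> 'v digraph \<Rightarrow> bool" where
  "subgraph_lt H H' \<longleftrightarrow> subgraph_le H H' \<and> H \<noteq> H'"

definition covers_in :: "'v digraph set \<Rightarrow> 'v digraph \<Rightarrow> 'v digraph \<Rightarrow> bool" where
  "covers_in S x y \<longleftrightarrow> x \<in> S \<and> y \<in> S \<and> subgraph_lt x y \<and>
     \<not> (\<exists>z\<in>S. subgraph_lt x z \<and> subgraph_lt z y)"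

definition faithful :: "'v digraph \<Rightarrow> 'v digraph set \<Rightarrow> bool" where
  "faithful G P \<longleftrightarrow> P \<subseteq> SG G \<and>
     (\<forall>x\<in>P. \<forall>y\<in>P. covers_in P x y \<longleftrightarrow> covers_in (SG G) x y)"

definition squared :: "'v digraph set \<Rightarrow> bool" where
  "squared P \<longleftrightarrow> (\<forall>x\<in>P. \<forall>y\<in>P. \<forall>z\<in>P. covers_in P x y \<and> covers_in P y z \<longrightarrow>
     (\<exists>!y'. y' \<in> P \<and> y' \<noteq> y \<and> covers_in P x y' \<and> covers_in P y' z))"

definition sign_assignment :: "'v digraph set \<Rightarrow> ('v digraph \<Rightarrow> 'v digraph \<Rightarrow> bit) \<Rightarrow> bool" where
  "sign_assignment P eps \<longleftrightarrow>
     (\<forall>x y y' z. covers_in P x y \<and> covers_in P y z \<and> covers_in P x y' \<and> covers_in P y' z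
        \<and> y \<noteq> y' \<longrightarrow> eps x y + eps y z = eps x y' + eps y' z + 1)"

definition level :: "'v digraph set \<Rightarrow> 'v digraph \<Rightarrow> nat" where
  "level P H = card (snd H) + card (fst H) - Min ((\<lambda>H'. card (snd H') + card (fst H')) ` P)"

text \<open>A category with objects Ob, Hom-sets Hom a b, composition cmp g f (= g after f)
  and identities idm. Each Hom-set is an abelian group under ad with neutral
  element zr a b.\<close>

definition homgrp :: "('o \<Rightarrow> 'o \<Rightarrow> 'm set) \<Rightarrow> ('m \<Rightarrow> 'm \<Rightarrow> 'm) \<Rightarrow> ('o \<Rightarrow> 'o \<Rightarrow> 'm)
    \<Rightarrow> 'o \<Rightarrow> 'o \<Rightarrow> 'm monoid" where
  "homgrp Hom ad zr a b = \<lparr>carrier = Hom a b, monoid.mult = ad, one = zr a b\<rparr>"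

definition is_category ::
  "'o set \<Rightarrow> ('o \<Rightarrow> 'o \<Rightarrow> 'm set) \<Rightarrow> ('m \<Rightarrow> 'm \<Rightarrow> 'm) \<Rightarrow> ('o \<Rightarrow> 'm) \<Rightarrow> bool" where
  "is_category Ob Hom cmp idm \<longleftrightarrow>
     (\<forall>a\<in>Ob. \<forall>b\<in>Ob. \<forall>a'\<in>Ob. \<forall>b'\<in>Ob. (a, b) \<noteq> (a', b') \<longrightarrow> Hom a b \<inter> Hom a' b' = {}) \<and>
     (\<forall>a\<in>Ob. \<forall>b\<in>Ob. \<forall>c\<in>Ob. \<forall>f\<in>Hom a b. \<forall>g\<in>Hom b c. cmp g f \<in> Hom a c) \<and>
     (\<forall>a\<in>Ob. \<forall>b\<in>Ob. \<forall>c\<in>Ob. \<forall>d\<in>Ob. \<forall>f\<in>Hom a b. \<forall>g\<in>Hom b c. \<forall>h\<in>Hom c d.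
        cmp h (cmp g f) = cmp (cmp h g) f) \<and>
     (\<forall>a\<in>Ob. idm a \<in> Hom a a) \<and>
     (\<forall>a\<in>Ob. \<forall>b\<in>Ob. \<forall>f\<in>Hom a b. cmp f (idm a) = f \<and> cmp (idm b) f = f)"

definition is_preadditive ::
  "'o set \<Rightarrow> ('o \<Rightarrow> 'o \<Rightarrow> 'm set) \<Rightarrow> ('m \<Rightarrow> 'm \<Rightarrow> 'm) \<Rightarrow> ('o \<Rightarrow> 'm)
    \<Rightarrow> ('m \<Rightarrow> 'm \<Rightarrow> 'm) \<Rightarrow> ('o \<Rightarrow> 'o \<Rightarrow> 'm) \<Rightarrow> bool" where
  "is_preadditive Ob Hom cmp idm ad zr \<longleftrightarrow>
     is_category Ob Hom cmp idm \<and>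
     (\<forall>a\<in>Ob. \<forall>b\<in>Ob. comm_group (homgrp Hom ad zr a b)) \<and>
     (\<forall>a\<in>Ob. \<forall>b\<in>Ob. \<forall>c\<in>Ob. \<forall>f\<in>Hom a b. \<forall>f'\<in>Hom a b. \<forall>g\<in>Hom b c.
        cmp g (ad f f') = ad (cmp g f) (cmp g f')) \<and>
     (\<forall>a\<in>Ob. \<forall>b\<in>Ob. \<forall>c\<in>Ob. \<forall>f\<in>Hom a b. \<forall>g\<in>Hom b c. \<forall>g'\<in>Hom b c.
        cmp (ad g g') f = ad (cmp g f) (cmp g' f))"

definition additive_category ::
  "'o set \<Rightarrow> ('o \<Rightarrow> 'o \<Rightarrow> 'm set) \<Rightarrow> ('m \<Rightarrow> 'm \<Rightarrow> 'm) \<Rightarrow> ('o \<Rightarrow> 'm)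
    \<Rightarrow> ('m \<Rightarrow> 'm \<Rightarrow> 'm) \<Rightarrow> ('o \<Rightarrow> 'o \<Rightarrow> 'm) \<Rightarrow> bool" where
  "additive_category Ob Hom cmp idm ad zr \<longleftrightarrow>
     is_preadditive Ob Hom cmp idm ad zr \<and>
     (\<exists>z\<in>Ob. idm z = zr z z) \<and>
     (\<forall>a\<in>Ob. \<forall>b\<in>Ob. \<exists>c\<in>Ob. \<exists>i1\<in>Hom a c. \<exists>i2\<in>Hom b c. \<exists>p1\<in>Hom c a. \<exists>p2\<in>Hom c b.
        cmp p1 i1 = idm a \<and> cmp p2 i2 = idm b \<and> cmp p1 i2 = zr b a \<and>
        cmp p2 i1 = zr a b \<and> ad (cmp i1 p1) (cmp i2 p2) = idm c)"

text \<open>Finite sums in a Hom-set, and multiplication by the sign (-1)^e, e in Z2.\<close>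
definition homsum :: "('o \<Rightarrow> 'o \<Rightarrow> 'm set) \<Rightarrow> ('m \<Rightarrow> 'm \<Rightarrow> 'm) \<Rightarrow> ('o \<Rightarrow> 'o \<Rightarrow> 'm)
    \<Rightarrow> 'o \<Rightarrow> 'o \<Rightarrow> ('i \<Rightarrow> 'm) \<Rightarrow> 'i set \<Rightarrow> 'm" where
  "homsum Hom ad zr a b f I = finprod (homgrp Hom ad zr a b) f I"

definition signed :: "('o \<Rightarrow> 'o \<Rightarrow> 'm set) \<Rightarrow> ('m \<Rightarrow> 'm \<Rightarrow> 'm) \<Rightarrow> ('o \<Rightarrow> 'o \<Rightarrow> 'm)
    \<Rightarrow> 'o \<Rightarrow> 'o \<Rightarrow> bit \<Rightarrow> 'm \<Rightarrow> 'm" where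
  "signed Hom ad zr a b e f = (if e = 0 then f else inv\<^bsub>homgrp Hom ad zr a b\<^esub> f)"

definition poset_functor ::
  "'v digraph set \<Rightarrow> 'o set \<Rightarrow> ('o \<Rightarrow> 'o \<Rightarrow> 'm set) \<Rightarrow> ('m \<Rightarrow> 'm \<Rightarrow> 'm) \<Rightarrow> ('o \<Rightarrow> 'm)
    \<Rightarrow> ('v digraph \<Rightarrow> 'o) \<Rightarrow> ('v digraph \<Rightarrow> 'v digraph \<Rightarrow> 'm) \<Rightarrow> bool" where
  "poset_functor P Ob Hom cmp idm Fo Fm \<longleftrightarrow>
     (\<forall>x\<in>P. Fo x \<in> Ob) \<and>
     (\<forall>x\<in>P. \<forall>y\<in>P. subgraph_le x y \<longrightarrow> Fm x y \<in> Hom (Fo x) (Fo y)) \<and>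
     (\<forall>x\<in>P. Fm x x = idm (Fo x)) \<and>
     (\<forall>x\<in>P. \<forall>y\<in>P. \<forall>z\<in>P. subgraph_le x y \<and> subgraph_le y z \<longrightarrow>
        cmp (Fm y z) (Fm x y) = Fm x z)"

text \<open>C is a biproduct (direct sum) of the family Fo H, H in P of level n, with
  injections iota and projections proj.\<close>
definition is_biproduct ::
  "('o \<Rightarrow> 'o \<Rightarrow> 'm set) \<Rightarrow> ('m \<Rightarrow> 'm \<Rightarrow> 'm) \<Rightarrow> ('o \<Rightarrow> 'm) \<Rightarrow> ('m \<Rightarrow> 'm \<Rightarrow> 'm) \<Rightarrow> ('o \<Rightarrow> 'o \<Rightarrow> 'm)
    \<Rightarrow> 'i set \<Rightarrow> ('i \<Rightarrow> 'o) \<Rightarrow> 'o \<Rightarrow> ('i \<Rightarrow> 'm) \<Rightarrow> ('i \<Rightarrow> 'm) \<Rightarrow> bool" where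
  "is_biproduct Hom cmp idm ad zr I X C iota proj \<longleftrightarrow>
     (\<forall>i\<in>I. iota i \<in> Hom (X i) C \<and> proj i \<in> Hom C (X i)) \<and>
     (\<forall>i\<in>I. cmp (proj i) (iota i) = idm (X i)) \<and>
     (\<forall>i\<in>I. \<forall>j\<in>I. i \<noteq> j \<longrightarrow> cmp (proj j) (iota i) = zr (X i) (X j)) \<and>
     homsum Hom ad zr C C (\<lambda>i. cmp (iota i) (proj i)) I = idm C"

definition level_set :: "'v digraph set \<Rightarrow> nat \<Rightarrow> 'v digraph set" where
  "level_set P n = {H \<in> P. level P H = n}"

text \<open>d^n = sum over H of level n, H' covering H in P, of
  (-1)^eps(H,H') F(H < H') (composed with the biproduct injection/projection).\<close>
definition differential ::
  "'v digraph set \<Rightarrow> ('o \<Rightarrow> 'o \<Rightarrow> 'm set) \<Rightarrow> ('m \<Rightarrow> 'm \<Rightarrow> 'm) \<Rightarrow> ('m \<Rightarrow> 'm \<Rightarrow> 'm) \<Rightarrow> ('o \<Rightarrow> 'o \<Rightarrow> 'm)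
    \<Rightarrow> ('v digraph \<Rightarrow> 'v digraph \<Rightarrow> bit) \<Rightarrow> ('v digraph \<Rightarrow> 'o) \<Rightarrow> ('v digraph \<Rightarrow> 'v digraph \<Rightarrow> 'm)
    \<Rightarrow> (nat \<Rightarrow> 'o) \<Rightarrow> (nat \<Rightarrow> 'v digraph \<Rightarrow> 'm) \<Rightarrow> (nat \<Rightarrow> 'v digraph \<Rightarrow> 'm) \<Rightarrow> nat \<Rightarrow> 'm" where
  "differential P Hom cmp ad zr eps Fo Fm C iota proj n =
     homsum Hom ad zr (C n) (C (Suc n))
       (\<lambda>H. homsum Hom ad zr (C n) (C (Suc n))
              (\<lambda>H'. cmp (iota (Suc n) H')
                      (cmp (signed Hom ad zr (Fo H) (Fo H') (eps H H') (Fm H H')) (proj n H)))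
              {H'. covers_in P H H'})
       (level_set P n)"

end

theory Submission
  imports Defs
begin

lemma grp_hom_finprod:
  assumes G: "comm_group G" and H: "comm_group H" and h: "h \<in> hom G H"
    and f: "f \<in> A \<rightarrow> carrier G"
  shows "h (finprod G f A) = finprod H (\<lambda>i. h (f i)) A"
proof -
  interpret G: comm_group G by (rule G)
  interpret H: comm_group H by (rule H)
  interpret gh: group_hom G H h by (unfold_locales) (rule h)
  show ?thesis using f
  proof (induction A rule: infinite_finite_induct)
    case (infinite A) then show ?case by simp
  next
    case empty then show ?case by simp
  next
    case (insert a A)
    then have fa: "f a \<in> carrier G" and fA: "f \<in> A \<rightarrow> carrier G" by auto
    have "h (finprod G f (insert a A)) = h (f a \<otimes>\<^bsub>G\<^esub> finprod G f A)"
      using insert fa fA by simp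
    also have "\<dots> = h (f a) \<otimes>\<^bsub>H\<^esub> h (finprod G f A)"
      using fa fA by simp
    also have "\<dots> = h (f a) \<otimes>\<^bsub>H\<^esub> finprod H (\<lambda>i. h (f i)) A"
      using insert fA by simp
    also have "\<dots> = finprod H (\<lambda>i. h (f i)) (insert a A)"
      using insert fa fA by (subst H.finprod_insert) (auto simp: Pi_def)
    finally show ?case .
  qed
qed

locale preadd =
  fixes Ob :: "'o set" and Hom :: "'o \<Rightarrow> 'o \<Rightarrow> 'm set" and cmp :: "'m \<Rightarrow> 'm \<Rightarrow> 'm"
    and idm :: "'o \<Rightarrow> 'm" and ad :: "'m \<Rightarrow> 'm \<Rightarrow> 'm" and zr :: "'o \<Rightarrow> 'o \<Rightarrow> 'm"
  assumes pa: "is_preadditive Ob Hom cmp idm ad zr"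
begin

abbreviation HG where "HG a b \<equiv> homgrp Hom ad zr a b"

lemma carrier_HG[simp]: "carrier (HG a b) = Hom a b"
  and mult_HG[simp]: "x \<otimes>\<^bsub>HG a b\<^esub> y = ad x y"
  and one_HG[simp]: "\<one>\<^bsub>HG a b\<^esub> = zr a b"
  by (simp_all add: homgrp_def)

lemma grp: "a \<in> Ob \<Longrightarrow> b \<in> Ob \<Longrightarrow> comm_group (HG a b)"
  using pa unfolding is_preadditive_def by blast

lemma cat: "is_category Ob Hom cmp idm" using pa unfolding is_preadditive_def by blast

lemma cmp_closed: "a \<in> Ob \<Longrightarrow> b \<in> Ob \<Longrightarrow> c \<in> Ob \<Longrightarrow> f \<in> Hom a b \<Longrightarrow> g \<in> Hom b c \<Longrightarrow> cmp g f \<in> Hom a c"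
  using cat unfolding is_category_def by blast

lemma assoc: "a \<in> Ob \<Longrightarrow> b \<in> Ob \<Longrightarrow> c \<in> Ob \<Longrightarrow> d \<in> Ob \<Longrightarrow> f \<in> Hom a b \<Longrightarrow> g \<in> Hom b c \<Longrightarrow> h \<in> Hom c d
   \<Longrightarrow> cmp h (cmp g f) = cmp (cmp h g) f"
  using cat unfolding is_category_def by blast

lemma idm_closed: "a \<in> Ob \<Longrightarrow> idm a \<in> Hom a a"
  using cat unfolding is_category_def by blast

lemma idm_r: "a \<in> Ob \<Longrightarrow> b \<in> Ob \<Longrightarrow> f \<in> Hom a b \<Longrightarrow> cmp f (idm a) = f"
  and idm_l: "a \<in> Ob \<Longrightarrow> b \<in> Ob \<Longrightarrow> f \<in> Hom a b \<Longrightarrow> cmp (idm b) f = f"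
  using cat unfolding is_category_def by blast+

lemma zr_closed: "a \<in> Ob \<Longrightarrow> b \<in> Ob \<Longrightarrow> zr a b \<in> Hom a b"
  using comm_group.axioms(2)[OF grp] group.is_monoid monoid.one_closed
  by (metis carrier_HG one_HG)

lemma hom_left: "a \<in> Ob \<Longrightarrow> b \<in> Ob \<Longrightarrow> c \<in> Ob \<Longrightarrow> g \<in> Hom b c \<Longrightarrow>
   (\<lambda>f. cmp g f) \<in> hom (HG a b) (HG a c)"
  using pa cmp_closed unfolding is_preadditive_def hom_def by (auto simp: Pi_def)

lemma hom_right: "a \<in> Ob \<Longrightarrow> b \<in> Ob \<Longrightarrow> c \<in> Ob \<Longrightarrow> f \<in> Hom a b \<Longrightarrow>
   (\<lambda>g. cmp g f) \<in> hom (HG b c) (HG a c)"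
  using pa cmp_closed unfolding is_preadditive_def hom_def by (auto simp: Pi_def)

lemma gh_left: "a \<in> Ob \<Longrightarrow> b \<in> Ob \<Longrightarrow> c \<in> Ob \<Longrightarrow> g \<in> Hom b c \<Longrightarrow>
   group_hom (HG a b) (HG a c) (\<lambda>f. cmp g f)"
  by (simp add: group_hom_def group_hom_axioms_def hom_left grp comm_group.axioms(2))

lemma gh_right: "a \<in> Ob \<Longrightarrow> b \<in> Ob \<Longrightarrow> c \<in> Ob \<Longrightarrow> f \<in> Hom a b \<Longrightarrow>
   group_hom (HG b c) (HG a c) (\<lambda>g. cmp g f)"
  by (simp add: group_hom_def group_hom_axioms_def hom_right grp comm_group.axioms(2))

lemma cmp_zr_l: "a \<in> Ob \<Longrightarrow> b \<in> Ob \<Longrightarrow> c \<in> Ob \<Longrightarrow> g \<in> Hom b c \<Longrightarrow> cmp g (zr a b) = zr a c"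
  using group_hom.hom_one[OF gh_left] by simp

lemma cmp_zr_r: "a \<in> Ob \<Longrightarrow> b \<in> Ob \<Longrightarrow> c \<in> Ob \<Longrightarrow> f \<in> Hom a b \<Longrightarrow> cmp (zr b c) f = zr a c"
  using group_hom.hom_one[OF gh_right] by simp

lemma cmp_inv_l: "a \<in> Ob \<Longrightarrow> b \<in> Ob \<Longrightarrow> c \<in> Ob \<Longrightarrow> g \<in> Hom b c \<Longrightarrow> f \<in> Hom a b \<Longrightarrow>
   cmp g (inv\<^bsub>HG a b\<^esub> f) = inv\<^bsub>HG a c\<^esub> (cmp g f)"
  using group_hom.hom_inv[OF gh_left] by simp

lemma cmp_inv_r: "a \<in> Ob \<Longrightarrow> b \<in> Ob \<Longrightarrow> c \<in> Ob \<Longrightarrow> g \<in> Hom b c \<Longrightarrow> f \<in> Hom a b \<Longrightarrow>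
   cmp (inv\<^bsub>HG b c\<^esub> g) f = inv\<^bsub>HG a c\<^esub> (cmp g f)"
  using group_hom.hom_inv[OF gh_right] by simp

lemma cmp_sum_l: "a \<in> Ob \<Longrightarrow> b \<in> Ob \<Longrightarrow> c \<in> Ob \<Longrightarrow> g \<in> Hom b c \<Longrightarrow> f \<in> I \<rightarrow> Hom a b \<Longrightarrow>
   cmp g (finprod (HG a b) f I) = finprod (HG a c) (\<lambda>i. cmp g (f i)) I"
  using grp_hom_finprod[OF grp grp hom_left, of a b c g f I] by simp

lemma cmp_sum_r: "a \<in> Ob \<Longrightarrow> b \<in> Ob \<Longrightarrow> c \<in> Ob \<Longrightarrow> f \<in> Hom a b \<Longrightarrow> g \<in> I \<rightarrow> Hom b c \<Longrightarrow>
   cmp (finprod (HG b c) g I) f = finprod (HG a c) (\<lambda>i. cmp (g i) f) I"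
  using grp_hom_finprod[OF grp[of b c] grp[of a c] hom_right[of a b c f], of g I] by simp

lemma sum_closed: "a \<in> Ob \<Longrightarrow> b \<in> Ob \<Longrightarrow> f \<in> I \<rightarrow> Hom a b \<Longrightarrow> finprod (HG a b) f I \<in> Hom a b"
  using comm_monoid.finprod_closed[OF comm_group.axioms(1)[OF grp], of a b f I] by simp

lemma inv_closed: "a \<in> Ob \<Longrightarrow> b \<in> Ob \<Longrightarrow> f \<in> Hom a b \<Longrightarrow> inv\<^bsub>HG a b\<^esub> f \<in> Hom a b"
  using group.inv_closed[OF comm_group.axioms(2)[OF grp], of a b f] by simp

lemma signed_closed: "a \<in> Ob \<Longrightarrow> b \<in> Ob \<Longrightarrow> f \<in> Hom a b \<Longrightarrow> signed Hom ad zr a b e f \<in> Hom a b"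
  by (simp add: signed_def inv_closed)

lemma signed_cmp: "a \<in> Ob \<Longrightarrow> b \<in> Ob \<Longrightarrow> c \<in> Ob \<Longrightarrow> g \<in> Hom b c \<Longrightarrow> f \<in> Hom a b \<Longrightarrow>
   cmp (signed Hom ad zr b c e g) (signed Hom ad zr a b e' f) = signed Hom ad zr a c (e + e') (cmp g f)"
  apply (cases e; cases e')
  apply (auto simp: signed_def cmp_inv_l cmp_inv_r inv_closed cmp_closed)
  using group.inv_inv[OF comm_group.axioms(2)[OF grp], of a c] cmp_closed by simp

lemma signed_cancel: "a \<in> Ob \<Longrightarrow> b \<in> Ob \<Longrightarrow> f \<in> Hom a b \<Longrightarrow>
   ad (signed Hom ad zr a b (e + 1) f) (signed Hom ad zr a b e f) = zr a b"
  apply (cases e)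
  using group.l_inv[OF comm_group.axioms(2)[OF grp], of a b f] group.r_inv[OF comm_group.axioms(2)[OF grp], of a b f]
  by (auto simp: signed_def)

end

definition sz :: "'v digraph \<Rightarrow> nat" where "sz H = card (snd H) + card (fst H)"

lemma digraph_fin: "is_digraph H \<Longrightarrow> finite (fst H) \<and> finite (snd H)"
  unfolding is_digraph_def by (meson finite_SigmaI finite_subset)

lemma finite_SG: "is_digraph G \<Longrightarrow> finite (SG G)"
proof -
  assume "is_digraph G"
  then have f: "finite (fst G)" "finite (snd G)" using digraph_fin by blast+
  have "SG G \<subseteq> Pow (fst G) \<times> Pow (snd G)" unfolding SG_def by auto
  then show ?thesis using f by (meson finite_Pow_iff finite_SigmaI finite_subset)
qed

lemma cov_SG:
  assumes G: "is_digraph G" and c: "covers_in (SG G) x y"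
  shows "sz y = Suc (sz x)"
proof -
  have xS: "x \<in> SG G" and yS: "y \<in> SG G" and lt: "subgraph_lt x y"
    and no: "\<And>z. z \<in> SG G \<Longrightarrow> subgraph_lt x z \<Longrightarrow> subgraph_lt z y \<Longrightarrow> False"
    using c unfolding covers_in_def by auto
  have dx: "is_digraph x" and dy: "is_digraph y" using xS yS unfolding SG_def by auto
  have fy: "finite (fst y)" "finite (snd y)" using digraph_fin[OF dy] by auto
  have le1: "fst x \<subseteq> fst y" and le2: "snd x \<subseteq> snd y" and ne: "x \<noteq> y"
    using lt unfolding subgraph_lt_def subgraph_le_def by auto
  show ?thesis
  proof (cases "snd x = snd y")
    case False
    then obtain e where e: "e \<in> snd y" "e \<notin> snd x" using le2 by auto
    define z where "z = (fst y, snd y - {e})"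
    have zS: "z \<in> SG G" using yS unfolding z_def SG_def is_digraph_def by auto
    have "z \<noteq> y" using e unfolding z_def by (metis Diff_iff insertI1 snd_conv)
    then have "subgraph_lt z y" using e unfolding z_def subgraph_lt_def subgraph_le_def by auto
    moreover have "subgraph_le x z" using le1 le2 e unfolding z_def subgraph_le_def by auto
    ultimately have "x = z" using no[OF zS] unfolding subgraph_lt_def by blast
    then have "fst x = fst y" "snd x = snd y - {e}" unfolding z_def by auto
    moreover have "Suc (card (snd y - {e})) = card (snd y)" using fy e by (intro card_Suc_Diff1)
    ultimately show ?thesis unfolding sz_def by simp
  next
    case True
    then have "fst x \<noteq> fst y" using ne by (metis prod.expand)
    then obtain v where v: "v \<in> fst y" "v \<notin> fst x" using le1 by auto
    define z where "z = (fst y - {v}, snd y)"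
    have "snd y \<subseteq> fst x \<times> fst x" using True dx unfolding is_digraph_def by auto
    then have zS: "z \<in> SG G" using yS v unfolding z_def SG_def is_digraph_def by auto
    have "z \<noteq> y" using v unfolding z_def by (metis Diff_iff insertI1 fst_conv)
    then have "subgraph_lt z y" using v unfolding z_def subgraph_lt_def subgraph_le_def by auto
    moreover have "subgraph_le x z" using le1 True v unfolding z_def subgraph_le_def by auto
    ultimately have "x = z" using no[OF zS] unfolding subgraph_lt_def by blast
    then have "fst x = fst y - {v}" "snd x = snd y" unfolding z_def by auto
    moreover have "Suc (card (fst y - {v})) = card (fst y)" using fy v by (intro card_Suc_Diff1)
    ultimately show ?thesis unfolding sz_def by simp
  qed
qed


locale cxs = preadd Ob Hom cmp idm ad zr
  for Ob :: "'o set" and Hom :: "'o \<Rightarrow> 'o \<Rightarrow> 'm set" and cmp :: "'m \<Rightarrow> 'm \<Rightarrow> 'm"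
    and idm :: "'o \<Rightarrow> 'm" and ad :: "'m \<Rightarrow> 'm \<Rightarrow> 'm" and zr :: "'o \<Rightarrow> 'o \<Rightarrow> 'm" +
  fixes G :: "'v digraph" and P :: "'v digraph set"
    and eps :: "'v digraph \<Rightarrow> 'v digraph \<Rightarrow> bit"
    and Fo :: "'v digraph \<Rightarrow> 'o" and Fm :: "'v digraph \<Rightarrow> 'v digraph \<Rightarrow> 'm"
    and C :: "nat \<Rightarrow> 'o" and iota :: "nat \<Rightarrow> 'v digraph \<Rightarrow> 'm" and proj :: "nat \<Rightarrow> 'v digraph \<Rightarrow> 'm"
  assumes dg: "is_digraph G"
    and fa: "faithful G P" and sq: "squared P"
    and sa: "sign_assignment P eps"
    and fu: "poset_functor P Ob Hom cmp idm Fo Fm"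
    and bp: "\<forall>n. C n \<in> Ob \<and> is_biproduct Hom cmp idm ad zr (level_set P n) Fo (C n) (iota n) (proj n)"
begin

abbreviation L where "L n \<equiv> level_set P n"
abbreviation cov where "cov \<equiv> covers_in P"
abbreviation s where "s H H' \<equiv> signed Hom ad zr (Fo H) (Fo H') (eps H H') (Fm H H')"
abbreviation d where "d n \<equiv> differential P Hom cmp ad zr eps Fo Fm C iota proj n"

lemma finP: "finite P"
  using fa finite_SG[OF dg] unfolding faithful_def by (meson finite_subset)

lemma LP: "H \<in> L n \<Longrightarrow> H \<in> P" and Llev: "H \<in> L n \<Longrightarrow> level P H = n"
  unfolding level_set_def by auto

lemma finL: "finite (L n)"
  using finP by (rule rev_finite_subset) (auto simp: level_set_def)

lemma FoOb: "H \<in> P \<Longrightarrow> Fo H \<in> Ob"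
  using fu unfolding poset_functor_def by blast

lemma FoL: "H \<in> L n \<Longrightarrow> Fo H \<in> Ob" using FoOb LP by blast

lemma COb: "C n \<in> Ob" using bp by blast

lemma iota_h: "H \<in> L n \<Longrightarrow> iota n H \<in> Hom (Fo H) (C n)"
  and proj_h: "H \<in> L n \<Longrightarrow> proj n H \<in> Hom (C n) (Fo H)"
  and pi_id: "H \<in> L n \<Longrightarrow> cmp (proj n H) (iota n H) = idm (Fo H)"
  and pi_zr: "H \<in> L n \<Longrightarrow> K \<in> L n \<Longrightarrow> H \<noteq> K \<Longrightarrow> cmp (proj n K) (iota n H) = zr (Fo H) (Fo K)"
  and sum_id: "finprod (HG (C n) (C n)) (\<lambda>i. cmp (iota n i) (proj n i)) (L n) = idm (C n)"
  using bp unfolding is_biproduct_def homsum_def by blast+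

lemma covD: "cov H H' \<Longrightarrow> H \<in> P \<and> H' \<in> P \<and> subgraph_le H H'"
  unfolding covers_in_def subgraph_lt_def by blast

lemma Fm_h: "cov H H' \<Longrightarrow> Fm H H' \<in> Hom (Fo H) (Fo H')"
  using fu covD unfolding poset_functor_def by blast

lemma s_h: "cov H H' \<Longrightarrow> s H H' \<in> Hom (Fo H) (Fo H')"
  using signed_closed Fm_h FoOb covD by blast

lemma fin_cov: "finite {H'. cov H H'}"
  using finP by (rule rev_finite_subset) (auto simp: covers_in_def)

lemma cov_L: assumes "cov H H'" "H \<in> L n" shows "H' \<in> L (Suc n)"
proof -
  have P: "H \<in> P" "H' \<in> P" using covD assms by auto
  have "covers_in (SG G) H H'" using fa assms P unfolding faithful_def by blast
  then have e: "sz H' = Suc (sz H)" using cov_SG dg by blast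
  define m where "m = Min ((\<lambda>H'. card (snd H') + card (fst H')) ` P)"
  have "m \<le> sz H" unfolding m_def sz_def using P finP by (intro Min_le) auto
  moreover have "level P H = sz H - m" "level P H' = sz H' - m"
    unfolding level_def m_def sz_def by auto
  ultimately show ?thesis using e assms(2) P unfolding level_set_def by auto
qed

lemma term_h: "H \<in> L n \<Longrightarrow> cov H H' \<Longrightarrow>
   cmp (iota (Suc n) H') (cmp (s H H') (proj n H)) \<in> Hom (C n) (C (Suc n))"
proof -
  assume a: "H \<in> L n" "cov H H'"
  then have b: "H' \<in> L (Suc n)" by (rule cov_L[rotated])
  have o: "Fo H \<in> Ob" "Fo H' \<in> Ob" using a b FoL by auto
  have "cmp (s H H') (proj n H) \<in> Hom (C n) (Fo H')"
    using cmp_closed[OF COb o proj_h[OF a(1)] s_h[OF a(2)]] .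
  then show ?thesis using cmp_closed[OF COb o(2) COb _ iota_h[OF b]] by blast
qed

lemma d_closed: "d n \<in> Hom (C n) (C (Suc n))"
  unfolding differential_def homsum_def
  by (intro sum_closed[OF COb COb] Pi_I) (auto intro: term_h)


lemma cm_HG: "a \<in> Ob \<Longrightarrow> b \<in> Ob \<Longrightarrow> comm_monoid (HG a b)"
  using grp comm_group.axioms(1) by blast

lemma s_idm: "cov H H' \<Longrightarrow> cmp (s H H') (idm (Fo H)) = s H H'"
  using idm_r[OF FoOb FoOb s_h] covD by blast

lemma is_h: "H \<in> L n \<Longrightarrow> cov H H' \<Longrightarrow> cmp (iota (Suc n) H') (s H H') \<in> Hom (Fo H) (C (Suc n))"
  using cmp_closed[OF FoL _ COb s_h iota_h] cov_L FoL by blast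

lemma d_iota:
  assumes H: "H \<in> L n"
  shows "cmp (d n) (iota n H) = finprod (HG (Fo H) (C (Suc n))) (\<lambda>H'. cmp (iota (Suc n) H') (s H H')) {H'. cov H H'}"
proof -
  define X where "X = Fo H"
  have X: "X \<in> Ob" using FoL H X_def by auto
  define R where "R = finprod (HG X (C (Suc n))) (\<lambda>H'. cmp (iota (Suc n) H') (s H H')) {H'. cov H H'}"
  have Rh: "R \<in> Hom X (C (Suc n))" unfolding R_def X_def
    using X H COb by (intro sum_closed Pi_I) (auto simp: X_def intro: is_h)
  have inner_h: "finprod (HG (C n) (C (Suc n))) (\<lambda>H'. cmp (iota (Suc n) H') (cmp (s H'' H') (proj n H''))) {H'. cov H'' H'}
     \<in> Hom (C n) (C (Suc n))" if "H'' \<in> L n" for H''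
    using that by (intro sum_closed[OF COb COb] Pi_I) (auto intro: term_h)
  have step: "cmp (finprod (HG (C n) (C (Suc n))) (\<lambda>H'. cmp (iota (Suc n) H') (cmp (s H'' H') (proj n H''))) {H'. cov H'' H'}) (iota n H)
      = (if H'' = H then R else zr X (C (Suc n)))" if H'': "H'' \<in> L n" for H''
  proof -
    have "cmp (finprod (HG (C n) (C (Suc n))) (\<lambda>H'. cmp (iota (Suc n) H') (cmp (s H'' H') (proj n H''))) {H'. cov H'' H'}) (iota n H)
       = finprod (HG X (C (Suc n))) (\<lambda>H'. cmp (cmp (iota (Suc n) H') (cmp (s H'' H') (proj n H''))) (iota n H)) {H'. cov H'' H'}"
      using H'' H by (intro cmp_sum_r[OF X COb COb]) (auto intro: term_h iota_h simp: X_def)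
    also have "\<dots> = finprod (HG X (C (Suc n))) (\<lambda>H'. cmp (iota (Suc n) H') (cmp (s H'' H') (cmp (proj n H'') (iota n H)))) {H'. cov H'' H'}"
    proof (intro comm_monoid.finprod_cong'[OF cm_HG[OF X COb]] refl Pi_I)
      fix H' assume "H' \<in> {H'. cov H'' H'}"
      then have c: "cov H'' H'" by simp
      then have H': "H' \<in> L (Suc n)" using cov_L H'' by blast
      have o: "Fo H'' \<in> Ob" "Fo H' \<in> Ob" using FoL H'' H' by auto
      have ih: "iota n H \<in> Hom X (C n)" using iota_h H X_def by simp
      have "cmp (s H'' H') (cmp (proj n H'') (iota n H)) = cmp (cmp (s H'' H') (proj n H'')) (iota n H)"
        using assoc[OF X COb o ih proj_h[OF H''] s_h[OF c]] .
      moreover have "cmp (iota (Suc n) H') (cmp (cmp (s H'' H') (proj n H'')) (iota n H))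
          = cmp (cmp (iota (Suc n) H') (cmp (s H'' H') (proj n H''))) (iota n H)"
        using assoc[OF X COb o(2) COb ih cmp_closed[OF COb o proj_h[OF H''] s_h[OF c]] iota_h[OF H']] .
      ultimately show "cmp (cmp (iota (Suc n) H') (cmp (s H'' H') (proj n H''))) (iota n H)
          = cmp (iota (Suc n) H') (cmp (s H'' H') (cmp (proj n H'') (iota n H)))" by simp
      show "cmp (iota (Suc n) H') (cmp (s H'' H') (cmp (proj n H'') (iota n H))) \<in> carrier (HG X (C (Suc n)))"
        using cmp_closed[OF X o(2) COb cmp_closed[OF X o cmp_closed[OF X COb o(1) ih proj_h[OF H'']] s_h[OF c]] iota_h[OF H']]
        by simp
    qed
    also have "\<dots> = (if H'' = H then R else zr X (C (Suc n)))"
    proof (cases "H'' = H")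
      case True
      have "finprod (HG X (C (Suc n))) (\<lambda>H'. cmp (iota (Suc n) H') (cmp (s H H') (cmp (proj n H) (iota n H)))) {H'. cov H H'} = R"
        unfolding R_def
        by (intro comm_monoid.finprod_cong'[OF cm_HG[OF X COb]] refl Pi_I)
          (auto simp: pi_id H X_def s_idm intro: is_h[OF H])
      then show ?thesis using True by simp
    next
      case False
      have "finprod (HG X (C (Suc n))) (\<lambda>H'. cmp (iota (Suc n) H') (cmp (s H'' H') (cmp (proj n H'') (iota n H)))) {H'. cov H'' H'}
          = zr X (C (Suc n))"
      proof (intro comm_monoid.finprod_one_eqI[OF cm_HG[OF X COb], simplified])
        fix H' assume "H' \<in> {H'. cov H'' H'}"
        then have c: "cov H'' H'" by simp
        then have H': "H' \<in> L (Suc n)" using cov_L H'' by blast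
        have o: "Fo H'' \<in> Ob" "Fo H' \<in> Ob" using FoL H'' H' by auto
        have "cmp (proj n H'') (iota n H) = zr X (Fo H'')" using pi_zr[OF H H''] False X_def by auto
        then show "cmp (iota (Suc n) H') (cmp (s H'' H') (cmp (proj n H'') (iota n H))) = zr X (C (Suc n))"
          using cmp_zr_l[OF X o s_h[OF c]] cmp_zr_l[OF X o(2) COb iota_h[OF H']] by simp
      qed
      then show ?thesis using False by simp
    qed
    finally show ?thesis .
  qed
  have "cmp (d n) (iota n H) = finprod (HG X (C (Suc n))) (\<lambda>H''. cmp (finprod (HG (C n) (C (Suc n))) (\<lambda>H'. cmp (iota (Suc n) H') (cmp (s H'' H') (proj n H''))) {H'. cov H'' H'}) (iota n H)) (L n)"
    unfolding differential_def homsum_def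
    using H by (intro cmp_sum_r[OF X COb COb]) (auto intro: inner_h iota_h simp: X_def)
  also have "\<dots> = finprod (HG X (C (Suc n))) (\<lambda>H''. if H'' = H then R else \<one>\<^bsub>HG X (C (Suc n))\<^esub>) (L n)"
    using step Rh zr_closed[OF X COb]
    by (intro comm_monoid.finprod_cong'[OF cm_HG[OF X COb]] refl Pi_I) auto
  also have "\<dots> = R"
    using comm_monoid.finprod_singleton_swap[OF cm_HG[OF X COb], of H "L n" "\<lambda>_. R"] H finL Rh by auto
  finally show ?thesis unfolding R_def X_def .
qed


lemma proj_sum:
  assumes K: "K \<in> L m" and S: "S \<subseteq> L m" and X: "X \<in> Ob"
    and c: "\<And>K'. K' \<in> S \<Longrightarrow> c K' \<in> Hom X (Fo K')"
  shows "cmp (proj m K) (finprod (HG X (C m)) (\<lambda>K'. cmp (iota m K') (c K')) S)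
     = (if K \<in> S then c K else zr X (Fo K))"
proof -
  have oK: "Fo K \<in> Ob" using FoL K by blast
  have finS: "finite S" using finL S by (rule rev_finite_subset)
  have "cmp (proj m K) (finprod (HG X (C m)) (\<lambda>K'. cmp (iota m K') (c K')) S)
     = finprod (HG X (Fo K)) (\<lambda>K'. cmp (proj m K) (cmp (iota m K') (c K'))) S"
    using S c by (intro cmp_sum_l[OF X COb oK proj_h[OF K]] Pi_I)
      (auto intro!: cmp_closed[OF X FoL COb _ iota_h])
  also have "\<dots> = finprod (HG X (Fo K)) (\<lambda>K'. if K' = K then c K else \<one>\<^bsub>HG X (Fo K)\<^esub>) S"
  proof (intro comm_monoid.finprod_cong'[OF cm_HG[OF X oK]] refl Pi_I)
    fix K' assume K': "K' \<in> S"
    then have K'L: "K' \<in> L m" using S by blast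
    have e: "cmp (proj m K) (cmp (iota m K') (c K')) = cmp (cmp (proj m K) (iota m K')) (c K')"
      using assoc[OF X FoL[OF K'L] COb oK c[OF K'] iota_h[OF K'L] proj_h[OF K]] .
    show "cmp (proj m K) (cmp (iota m K') (c K')) = (if K' = K then c K else \<one>\<^bsub>HG X (Fo K)\<^esub>)"
    proof (cases "K' = K")
      case True then show ?thesis using e pi_id[OF K] idm_l[OF X oK c] K' by simp
    next
      case False then show ?thesis using e pi_zr[OF K'L K False] cmp_zr_r[OF X FoL[OF K'L] oK c[OF K']] by simp
    qed
    show "(if K' = K then c K else \<one>\<^bsub>HG X (Fo K)\<^esub>) \<in> carrier (HG X (Fo K))"
      using c[OF K'] zr_closed[OF X oK] by auto
  qed
  also have "\<dots> = (if K \<in> S then c K else zr X (Fo K))"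
  proof (cases "K \<in> S")
    case True
    then show ?thesis
      using comm_monoid.finprod_singleton_swap[OF cm_HG[OF X oK], of K S "\<lambda>_. c K"] finS c by auto
  next
    case False
    then show ?thesis
      by (subst comm_monoid.finprod_one_eqI[OF cm_HG[OF X oK]]) (auto simp del: one_HG, simp)
  qed
  finally show ?thesis .
qed

lemma zero_r:
  assumes D: "D \<in> Ob" and f: "f \<in> Hom (C n) D"
    and z: "\<And>H. H \<in> L n \<Longrightarrow> cmp f (iota n H) = zr (Fo H) D"
  shows "f = zr (C n) D"
proof -
  have "f = cmp f (idm (C n))" using idm_r[OF COb D f] by simp
  also have "\<dots> = finprod (HG (C n) D) (\<lambda>i. cmp f (cmp (iota n i) (proj n i))) (L n)"
    unfolding sum_id[symmetric]
    by (intro cmp_sum_l[OF COb COb D f] Pi_I) (auto intro!: cmp_closed[OF COb FoL COb proj_h iota_h])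
  also have "\<dots> = zr (C n) D"
  proof (intro comm_monoid.finprod_one_eqI[OF cm_HG[OF COb D], simplified])
    fix i assume i: "i \<in> L n"
    have "cmp f (cmp (iota n i) (proj n i)) = cmp (cmp f (iota n i)) (proj n i)"
      using assoc[OF COb FoL[OF i] COb D proj_h[OF i] iota_h[OF i] f] .
    then show "cmp f (cmp (iota n i) (proj n i)) = zr (C n) D"
      using z[OF i] cmp_zr_r[OF COb FoL[OF i] D proj_h[OF i]] by simp
  qed
  finally show ?thesis .
qed

lemma zero_l:
  assumes X: "X \<in> Ob" and g: "g \<in> Hom X (C m)"
    and z: "\<And>K. K \<in> L m \<Longrightarrow> cmp (proj m K) g = zr X (Fo K)"
  shows "g = zr X (C m)"
proof -
  have "g = cmp (idm (C m)) g" using idm_l[OF X COb g] by simp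
  also have "\<dots> = finprod (HG X (C m)) (\<lambda>i. cmp (cmp (iota m i) (proj m i)) g) (L m)"
    unfolding sum_id[symmetric]
    by (intro cmp_sum_r[OF X COb COb g] Pi_I) (auto intro!: cmp_closed[OF COb FoL COb proj_h iota_h])
  also have "\<dots> = zr X (C m)"
  proof (intro comm_monoid.finprod_one_eqI[OF cm_HG[OF X COb], simplified])
    fix i assume i: "i \<in> L m"
    have "cmp (iota m i) (cmp (proj m i) g) = cmp (cmp (iota m i) (proj m i)) g"
      using assoc[OF X COb FoL[OF i] COb g proj_h[OF i] iota_h[OF i]] .
    then show "cmp (cmp (iota m i) (proj m i)) g = zr X (C m)"
      using z[OF i] cmp_zr_l[OF X FoL[OF i] COb iota_h[OF i]] by simp
  qed
  finally show ?thesis .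
qed


lemma c_eq:
  assumes "cov H H'" "cov H' K"
  shows "cmp (s H' K) (s H H') = signed Hom ad zr (Fo H) (Fo K) (eps H' K + eps H H') (Fm H K)"
proof -
  have P: "H \<in> P" "H' \<in> P" "K \<in> P" "subgraph_le H H'" "subgraph_le H' K" using covD assms by auto
  have "cmp (Fm H' K) (Fm H H') = Fm H K" using fu P unfolding poset_functor_def by blast
  then show ?thesis using signed_cmp[OF FoOb FoOb FoOb Fm_h Fm_h] P assms by metis
qed

lemma pair_sum:
  assumes H: "H \<in> P" and K: "K \<in> P"
  shows "finprod (HG (Fo H) (Fo K)) (\<lambda>H'. cmp (s H' K) (s H H')) {H'. cov H H' \<and> cov H' K} = zr (Fo H) (Fo K)"
proof (cases "{H'. cov H H' \<and> cov H' K} = {}")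
  case True then show ?thesis
    using comm_monoid.finprod_empty[OF cm_HG[OF FoOb[OF H] FoOb[OF K]]] by (metis one_HG)
next
  case False
  then obtain y where y: "cov H y" "cov y K" by auto
  have yP: "y \<in> P" using covD y by blast
  have "\<exists>!y'. y' \<in> P \<and> y' \<noteq> y \<and> cov H y' \<and> cov y' K" using sq H K yP y unfolding squared_def by blast
  then obtain y' where y': "y' \<in> P" "y' \<noteq> y" "cov H y'" "cov y' K"
    and un: "\<And>z. z \<in> P \<Longrightarrow> z \<noteq> y \<Longrightarrow> cov H z \<Longrightarrow> cov z K \<Longrightarrow> z = y'" by metis
  have T: "{H'. cov H H' \<and> cov H' K} = {y, y'}" using y y' un covD by blast
  define f where "f = Fm H K"
  have oH: "Fo H \<in> Ob" and oK: "Fo K \<in> Ob" using FoOb H K by auto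
  have le: "subgraph_le H K" using covD y unfolding subgraph_le_def by blast
  have fh: "f \<in> Hom (Fo H) (Fo K)" using fu H K le unfolding poset_functor_def f_def by blast
  have e: "eps y K + eps H y = (eps y' K + eps H y') + 1"
    using sa y y' unfolding sign_assignment_def by (metis add.commute)
  have cl: "cmp (s y' K) (s H y') \<in> Hom (Fo H) (Fo K)"
    using cmp_closed[OF oH FoOb[OF y'(1)] oK s_h[OF y'(3)] s_h[OF y'(4)]] .
  have "finprod (HG (Fo H) (Fo K)) (\<lambda>H'. cmp (s H' K) (s H H')) {y, y'}
      = ad (cmp (s y K) (s H y)) (finprod (HG (Fo H) (Fo K)) (\<lambda>H'. cmp (s H' K) (s H H')) {y'})"
    using y y' by (subst comm_monoid.finprod_insert[OF cm_HG[OF oH oK]])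
      (auto intro!: cmp_closed[OF oH FoOb oK] s_h FoOb simp: covD)
  also have "\<dots> = ad (cmp (s y K) (s H y)) (cmp (s y' K) (s H y'))"
    using y' cl monoid.r_one[OF group.is_monoid[OF comm_group.axioms(2)[OF grp[OF oH oK]]], simplified] by (subst comm_monoid.finprod_insert[OF cm_HG[OF oH oK]])
      (auto intro!: cmp_closed[OF oH FoOb oK] s_h FoOb simp: covD comm_monoid.finprod_empty[OF cm_HG[OF oH oK]]
        monoid.r_one[OF group.is_monoid[OF comm_group.axioms(2)[OF grp[OF oH oK]]], simplified])
  also have "\<dots> = ad (signed Hom ad zr (Fo H) (Fo K) ((eps y' K + eps H y') + 1) f)
                     (signed Hom ad zr (Fo H) (Fo K) (eps y' K + eps H y') f)"
    using c_eq y y' e unfolding f_def by simp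
  also have "\<dots> = zr (Fo H) (Fo K)" using signed_cancel[OF oH oK fh] .
  finally show ?thesis using T by simp
qed


lemma W_eq:
  assumes H: "H \<in> L n" and c: "cov H H'"
  shows "cmp (d (Suc n)) (cmp (iota (Suc n) H') (s H H'))
    = finprod (HG (Fo H) (C (Suc (Suc n)))) (\<lambda>K'. cmp (iota (Suc (Suc n)) K') (cmp (s H' K') (s H H'))) {K'. cov H' K'}"
proof -
  have H': "H' \<in> L (Suc n)" using cov_L[OF c H] .
  have X: "Fo H \<in> Ob" and Y: "Fo H' \<in> Ob" using FoL H H' by auto
  have "cmp (d (Suc n)) (cmp (iota (Suc n) H') (s H H')) = cmp (cmp (d (Suc n)) (iota (Suc n) H')) (s H H')"
    using assoc[OF X Y COb COb s_h[OF c] iota_h[OF H'] d_closed] .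
  also have "\<dots> = cmp (finprod (HG (Fo H') (C (Suc (Suc n)))) (\<lambda>K'. cmp (iota (Suc (Suc n)) K') (s H' K')) {K'. cov H' K'}) (s H H')"
    using d_iota[OF H'] by simp
  also have "\<dots> = finprod (HG (Fo H) (C (Suc (Suc n)))) (\<lambda>K'. cmp (cmp (iota (Suc (Suc n)) K') (s H' K')) (s H H')) {K'. cov H' K'}"
    by (intro cmp_sum_r[OF X Y COb s_h[OF c]] Pi_I) (auto intro: is_h[OF H'])
  also have "\<dots> = finprod (HG (Fo H) (C (Suc (Suc n)))) (\<lambda>K'. cmp (iota (Suc (Suc n)) K') (cmp (s H' K') (s H H'))) {K'. cov H' K'}"
  proof (intro comm_monoid.finprod_cong'[OF cm_HG[OF X COb]] refl Pi_I)
    fix K' assume "K' \<in> {K'. cov H' K'}"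
    then have c2: "cov H' K'" by simp
    have K': "K' \<in> L (Suc (Suc n))" using cov_L[OF c2 H'] .
    have Z: "Fo K' \<in> Ob" using FoL K' by blast
    show "cmp (cmp (iota (Suc (Suc n)) K') (s H' K')) (s H H') = cmp (iota (Suc (Suc n)) K') (cmp (s H' K') (s H H'))"
      using assoc[OF X Y Z COb s_h[OF c] s_h[OF c2] iota_h[OF K']] by simp
    show "cmp (iota (Suc (Suc n)) K') (cmp (s H' K') (s H H')) \<in> carrier (HG (Fo H) (C (Suc (Suc n))))"
      using cmp_closed[OF X Z COb cmp_closed[OF X Y Z s_h[OF c] s_h[OF c2]] iota_h[OF K']] by simp
  qed
  finally show ?thesis .
qed

lemma main:
  assumes H: "H \<in> L n" and K: "K \<in> L (Suc (Suc n))"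
  shows "cmp (proj (Suc (Suc n)) K) (cmp (cmp (d (Suc n)) (d n)) (iota n H)) = zr (Fo H) (Fo K)"
proof -
  have X: "Fo H \<in> Ob" and Z: "Fo K \<in> Ob" using FoL H K by auto
  have HP: "H \<in> P" and KP: "K \<in> P" using LP H K by auto
  define W where "W H' = finprod (HG (Fo H) (C (Suc (Suc n)))) (\<lambda>K'. cmp (iota (Suc (Suc n)) K') (cmp (s H' K') (s H H'))) {K'. cov H' K'}" for H'
  have Wh: "W H' \<in> Hom (Fo H) (C (Suc (Suc n)))" if c: "cov H H'" for H'
  proof -
    have H': "H' \<in> L (Suc n)" using cov_L[OF c H] .
    have Y: "Fo H' \<in> Ob" using FoL H' by blast
    show ?thesis unfolding W_def
    proof (intro sum_closed[OF X COb] Pi_I)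
      fix K' assume "K' \<in> {K'. cov H' K'}"
      then have c2: "cov H' K'" by simp
      have K': "K' \<in> L (Suc (Suc n))" using cov_L[OF c2 H'] .
      have Z': "Fo K' \<in> Ob" using FoL K' by blast
      show "cmp (iota (Suc (Suc n)) K') (cmp (s H' K') (s H H')) \<in> Hom (Fo H) (C (Suc (Suc n)))"
        using cmp_closed[OF X Z' COb cmp_closed[OF X Y Z' s_h[OF c] s_h[OF c2]] iota_h[OF K']] .
    qed
  qed
  have "cmp (cmp (d (Suc n)) (d n)) (iota n H) = cmp (d (Suc n)) (cmp (d n) (iota n H))"
    using assoc[OF X COb COb COb iota_h[OF H] d_closed d_closed] by simp
  also have "\<dots> = cmp (d (Suc n)) (finprod (HG (Fo H) (C (Suc n))) (\<lambda>H'. cmp (iota (Suc n) H') (s H H')) {H'. cov H H'})"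
    using d_iota[OF H] by simp
  also have "\<dots> = finprod (HG (Fo H) (C (Suc (Suc n)))) (\<lambda>H'. cmp (d (Suc n)) (cmp (iota (Suc n) H') (s H H'))) {H'. cov H H'}"
    by (intro cmp_sum_l[OF X COb COb d_closed] Pi_I) (auto intro: is_h[OF H])
  also have "\<dots> = finprod (HG (Fo H) (C (Suc (Suc n)))) W {H'. cov H H'}"
    by (intro comm_monoid.finprod_cong'[OF cm_HG[OF X COb]] refl Pi_I)
      (auto simp: W_eq[OF H] W_def[symmetric] intro: Wh)
  finally have eq1: "cmp (cmp (d (Suc n)) (d n)) (iota n H) = finprod (HG (Fo H) (C (Suc (Suc n)))) W {H'. cov H H'}" .
  have "cmp (proj (Suc (Suc n)) K) (finprod (HG (Fo H) (C (Suc (Suc n)))) W {H'. cov H H'})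
     = finprod (HG (Fo H) (Fo K)) (\<lambda>H'. cmp (proj (Suc (Suc n)) K) (W H')) {H'. cov H H'}"
    by (intro cmp_sum_l[OF X COb Z proj_h[OF K]] Pi_I) (auto intro: Wh)
  also have "\<dots> = finprod (HG (Fo H) (Fo K)) (\<lambda>H'. if cov H' K then cmp (s H' K) (s H H') else \<one>\<^bsub>HG (Fo H) (Fo K)\<^esub>) {H'. cov H H'}"
  proof (intro comm_monoid.finprod_cong'[OF cm_HG[OF X Z]] refl Pi_I)
    fix H' assume "H' \<in> {H'. cov H H'}"
    then have c: "cov H H'" by simp
    have H': "H' \<in> L (Suc n)" using cov_L[OF c H] .
    have Y: "Fo H' \<in> Ob" using FoL H' by blast
    have "cmp (proj (Suc (Suc n)) K) (W H') = (if K \<in> {K'. cov H' K'} then cmp (s H' K) (s H H') else zr (Fo H) (Fo K))"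
      unfolding W_def
    proof (rule proj_sum[OF K _ X])
      show "{K'. cov H' K'} \<subseteq> L (Suc (Suc n))" using cov_L[OF _ H'] by blast
      fix K' assume "K' \<in> {K'. cov H' K'}"
      then have c2: "cov H' K'" by simp
      have K': "K' \<in> L (Suc (Suc n))" using cov_L[OF c2 H'] .
      have Z': "Fo K' \<in> Ob" using FoL K' by blast
      show "cmp (s H' K') (s H H') \<in> Hom (Fo H) (Fo K')"
        using cmp_closed[OF X Y Z' s_h[OF c] s_h[OF c2]] .
    qed
    then show "cmp (proj (Suc (Suc n)) K) (W H') = (if cov H' K then cmp (s H' K) (s H H') else \<one>\<^bsub>HG (Fo H) (Fo K)\<^esub>)"
      by simp
    show "(if cov H' K then cmp (s H' K) (s H H') else \<one>\<^bsub>HG (Fo H) (Fo K)\<^esub>) \<in> carrier (HG (Fo H) (Fo K))"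
      using cmp_closed[OF X Y Z s_h[OF c] s_h] zr_closed[OF X Z] by auto
  qed
  also have "\<dots> = finprod (HG (Fo H) (Fo K)) (\<lambda>H'. cmp (s H' K) (s H H')) {H'. cov H H' \<and> cov H' K}"
  proof (rule comm_monoid.finprod_mono_neutral_cong_right[OF cm_HG[OF X Z]])
    show "finite {H'. cov H H'}" by (rule fin_cov)
    show "{H'. cov H H' \<and> cov H' K} \<subseteq> {H'. cov H H'}" by blast
    show "\<And>i. i \<in> {H'. cov H H'} - {H'. cov H H' \<and> cov H' K} \<Longrightarrow>
      (if cov i K then cmp (s i K) (s H i) else \<one>\<^bsub>HG (Fo H) (Fo K)\<^esub>) = \<one>\<^bsub>HG (Fo H) (Fo K)\<^esub>" by auto
    show "\<And>x. x \<in> {H'. cov H H' \<and> cov H' K} \<Longrightarrow>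
      (if cov x K then cmp (s x K) (s H x) else \<one>\<^bsub>HG (Fo H) (Fo K)\<^esub>) = cmp (s x K) (s H x)" by auto
    show "(\<lambda>H'. if cov H' K then cmp (s H' K) (s H H') else \<one>\<^bsub>HG (Fo H) (Fo K)\<^esub>) \<in> {H'. cov H H'} \<rightarrow> carrier (HG (Fo H) (Fo K))"
    proof (rule Pi_I)
      fix H' assume "H' \<in> {H'. cov H H'}"
      then have c: "cov H H'" by simp
      have Y: "Fo H' \<in> Ob" using FoOb covD c by blast
      show "(if cov H' K then cmp (s H' K) (s H H') else \<one>\<^bsub>HG (Fo H) (Fo K)\<^esub>) \<in> carrier (HG (Fo H) (Fo K))"
        using cmp_closed[OF X Y Z s_h[OF c] s_h] zr_closed[OF X Z] by auto
    qed
  qed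
  also have "\<dots> = zr (Fo H) (Fo K)" using pair_sum[OF HP KP] .
  finally show ?thesis using eq1 by simp
qed

theorem d_d: "cmp (d (Suc n)) (d n) = zr (C n) (C (Suc (Suc n)))"
proof (rule zero_r[OF COb])
  show "cmp (d (Suc n)) (d n) \<in> Hom (C n) (C (Suc (Suc n)))"
    using cmp_closed[OF COb COb COb d_closed d_closed] .
  fix H assume H: "H \<in> L n"
  have X: "Fo H \<in> Ob" using FoL H by blast
  show "cmp (cmp (d (Suc n)) (d n)) (iota n H) = zr (Fo H) (C (Suc (Suc n)))"
  proof (rule zero_l[OF X])
    show "cmp (cmp (d (Suc n)) (d n)) (iota n H) \<in> Hom (Fo H) (C (Suc (Suc n)))"
      using cmp_closed[OF X COb COb iota_h[OF H] cmp_closed[OF COb COb COb d_closed d_closed]] .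
    fix K assume "K \<in> L (Suc (Suc n))"
    then show "cmp (proj (Suc (Suc n)) K) (cmp (cmp (d (Suc n)) (d n)) (iota n H)) = zr (Fo H) (Fo K)"
      using main[OF H] by blast
  qed
qed

end
theorem theorem3p7:
  fixes G :: "'v digraph" and P :: "'v digraph set"
    and Ob :: "'o set" and Hom :: "'o \<Rightarrow> 'o \<Rightarrow> 'm set" and cmp :: "'m \<Rightarrow> 'm \<Rightarrow> 'm"
    and idm :: "'o \<Rightarrow> 'm" and ad :: "'m \<Rightarrow> 'm \<Rightarrow> 'm" and zr :: "'o \<Rightarrow> 'o \<Rightarrow> 'm"
    and eps :: "'v digraph \<Rightarrow> 'v digraph \<Rightarrow> bit"
    and Fo :: "'v digraph \<Rightarrow> 'o" and Fm :: "'v digraph \<Rightarrow> 'v digraph \<Rightarrow> 'm"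
    and C :: "nat \<Rightarrow> 'o" and iota :: "nat \<Rightarrow> 'v digraph \<Rightarrow> 'm" and proj :: "nat \<Rightarrow> 'v digraph \<Rightarrow> 'm"
  assumes "additive_category Ob Hom cmp idm ad zr"
    and "is_digraph G"
    and "faithful G P" and "squared P"
    and "sign_assignment P eps"
    and "poset_functor P Ob Hom cmp idm Fo Fm"
    and "\<forall>n. C n \<in> Ob \<and> is_biproduct Hom cmp idm ad zr (level_set P n) Fo (C n) (iota n) (proj n)"
  shows "\<forall>n. cmp (differential P Hom cmp ad zr eps Fo Fm C iota proj (Suc n))
                   (differential P Hom cmp ad zr eps Fo Fm C iota proj n)
             = zr (C n) (C (Suc (Suc n)))"
  proof -
  interpret cxs Ob Hom cmp idm ad zr G P eps Fo Fm C iota proj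
  proof (unfold_locales)
    show "is_preadditive Ob Hom cmp idm ad zr" using assms(1) unfolding additive_category_def by blast
  qed (use assms in auto)
  show ?thesis using d_d by blast
qed

end
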